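(* Let $(\Omega,\mathcal F,\mathbb P)$ be a probability space with filtration $\{\mathcal F_n\}_{n\ge0}$, let $\{X_n\}_{n\ge0}$ be a supermartingale adapted to $\{\mathcal F_n\}$, and let $\kappa$ be a stopping time w.r.t. $\{\mathcal F_n\}$. Suppose there exist positive reals $b_1,b_2,c_1,c_2,c_3$ with $c_2>c_3$ such that (A1) $\mathbb P(\kappa>n)\le c_1e^{-c_2 n}$ for all sufficiently large $n\in\mathbb N$, and (A2) for all $n\in\mathbb N$, $|X_{n+1}-X_n|\le b_1 n^{b_2}e^{c_3 n}$ almost surely. Then $\mathbb E(|X_\kappa|)<\infty$ and $\mathbb E(X_\kappa)\le\mathbb E(X_0)$.
   Context: A supermartingale is an adapted process with $\mathbb E|X_n|<\infty$ and $\mathbb E(X_{n+1}\mid\mathcal F_n)\le X_n$ a.s. for all $n$. A stopping time is a random variable $\kappa:\Omega\to\mathbb N\cup\{\infty\}$ with $\{\kappa\le n\}\in\mathcal F_n$ for all $n$. *)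

theory Defs
  imports "HOL-Probability.Probability" "HOL-Library.Extended_Nat"
begin

definition nat_filtration :: "'a measure \<Rightarrow> (nat \<Rightarrow> 'a measure) \<Rightarrow> bool" where
  "nat_filtration M F \<longleftrightarrow> (\<forall>n. subalgebra M (F n)) \<and> (\<forall>m n. m \<le> n \<longrightarrow> sets (F m) \<subseteq> sets (F n))"

definition supermartingale :: "'a measure \<Rightarrow> (nat \<Rightarrow> 'a measure) \<Rightarrow> (nat \<Rightarrow> 'a \<Rightarrow> real) \<Rightarrow> bool" where
  "supermartingale M F X \<longleftrightarrow>
     (\<forall>n. X n \<in> borel_measurable (F n)) \<and>
     (\<forall>n. integrable M (X n)) \<and>
     (\<forall>n. AE \<omega> in M. real_cond_exp M (F n) (X (Suc n)) \<omega> \<le> X n \<omega>)"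

definition nat_stopping_time :: "'a measure \<Rightarrow> (nat \<Rightarrow> 'a measure) \<Rightarrow> ('a \<Rightarrow> enat) \<Rightarrow> bool" where
  "nat_stopping_time M F \<kappa> \<longleftrightarrow> (\<forall>n. {\<omega> \<in> space M. \<kappa> \<omega> \<le> enat n} \<in> sets (F n))"

text \<open>The stopped value X_\<kappa>; on the event {\<kappa> = \<infinity>} it is set to 0 (a null event under the hypotheses).\<close>
definition stopped_value :: "(nat \<Rightarrow> 'a \<Rightarrow> real) \<Rightarrow> ('a \<Rightarrow> enat) \<Rightarrow> 'a \<Rightarrow> real" where
  "stopped_value X \<kappa> \<omega> = (case \<kappa> \<omega> of enat n \<Rightarrow> X n \<omega> | \<infinity> \<Rightarrow> 0)"

end

theory Submission
  imports Defs "HOL-Real_Asymp.Real_Asymp"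
begin

lemma summ_aux:
  fixes a b :: real assumes "a > 0"
  shows "summable (\<lambda>n::nat. real n powr b * exp (-a * real n))"
proof (rule summable_comparison_test_bigo)
  have e: "(\<lambda>n::nat. exp (-(a/2) * real n)) = (\<lambda>n. exp (-(a/2)) ^ n)"
    by (simp add: exp_of_nat_mult[symmetric] mult.commute)
  show "summable (\<lambda>n::nat. norm (exp (-(a/2) * real n)))"
    unfolding real_norm_def abs_exp_cancel e using assms by (intro summable_geometric) simp
  show "(\<lambda>n::nat. real n powr b * exp (-a * real n)) \<in> O(\<lambda>n. exp (-(a/2) * real n))"
    using assms by real_asymp
qed

lemma enat_all_less: "(\<forall>n. enat n < x) \<longleftrightarrow> x = \<infinity>"
  by (cases x) auto

theorem theorem4p3:
  fixes M :: "'a measure" and F :: "nat \<Rightarrow> 'a measure"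
    and X :: "nat \<Rightarrow> 'a \<Rightarrow> real" and \<kappa> :: "'a \<Rightarrow> enat"
    and b1 b2 c1 c2 c3 :: real
  assumes "prob_space M"
    and "nat_filtration M F"
    and "supermartingale M F X"
    and "nat_stopping_time M F \<kappa>"
    and "b1 > 0" "b2 > 0" "c1 > 0" "c2 > 0" "c3 > 0" "c2 > c3"
    and A1: "\<exists>N. \<forall>n\<ge>N. measure M {\<omega> \<in> space M. \<kappa> \<omega> > enat n} \<le> c1 * exp (- c2 * real n)"
    and A2: "\<forall>n\<ge>1. AE \<omega> in M. \<bar>X (Suc n) \<omega> - X n \<omega>\<bar> \<le> b1 * real n powr b2 * exp (c3 * real n)"
  shows "integrable M (stopped_value X \<kappa>) \<and>
         (\<integral>\<omega>. stopped_value X \<kappa> \<omega> \<partial>M) \<le> (\<integral>\<omega>. X 0 \<omega> \<partial>M)"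
proof -
  interpret prob_space M by fact
  have sub: "\<And>i. subalgebra M (F i)" using assms(2) unfolding nat_filtration_def by auto
  have Xint: "\<And>i. integrable M (X i)" and XF: "\<And>i. X i \<in> borel_measurable (F i)"
    and sm: "\<And>i. AE \<omega> in M. real_cond_exp M (F i) (X (Suc i)) \<omega> \<le> X i \<omega>"
    using assms(3) unfolding supermartingale_def by auto
  have Xm[measurable]: "\<And>i. X i \<in> borel_measurable M"
    using Xint by auto
  define L where "L i = {\<omega> \<in> space M. \<kappa> \<omega> \<le> enat i}" for i
  define B where "B i = {\<omega> \<in> space M. \<kappa> \<omega> > enat i}" for i
  have LF: "L i \<in> sets (F i)" for i using assms(4) unfolding nat_stopping_time_def L_def by auto
  have BL: "B i = space (F i) - L i" for i
    using sub[of i] unfolding B_def L_def subalgebra_def by auto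
  have BF: "B i \<in> sets (F i)" for i unfolding BL using LF by auto
  have BM[measurable]: "B i \<in> sets M" for i using BF sub unfolding subalgebra_def by auto
  have LM[measurable]: "L i \<in> sets M" for i using LF sub unfolding subalgebra_def by auto
  define f where "f i \<omega> = indicator (B i) \<omega> * (X (Suc i) \<omega> - X i \<omega>)" for i \<omega>
  have fint: "integrable M (f i)" for i
    unfolding f_def using integrable_mult_indicator[OF BM[of i] Bochner_Integration.integrable_diff[OF Xint[of "Suc i"] Xint[of i]]]
    by simp
  have fle: "(\<integral>\<omega>. f i \<omega> \<partial>M) \<le> 0" for i
  proof -
    interpret finite_measure_subalgebra M "F i" by unfold_locales (rule sub)
    have i1: "integrable M (\<lambda>x. indicator (B i) x * X (Suc i) x)"
      using integrable_mult_indicator[OF BM[of i] Xint[of "Suc i"]] by simp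
    have i2: "integrable M (\<lambda>x. indicator (B i) x * X i x)"
      using integrable_mult_indicator[OF BM[of i] Xint[of i]] by simp
    have ind: "indicator (B i) \<in> borel_measurable (F i)" using BF by simp
    have "(\<integral>x. indicator (B i) x * X (Suc i) x \<partial>M) = (\<integral>x. indicator (B i) x * real_cond_exp M (F i) (X (Suc i)) x \<partial>M)"
      using real_cond_exp_intg(2)[OF i1 ind Xm] by simp
    also have "\<dots> \<le> (\<integral>x. indicator (B i) x * X i x \<partial>M)"
    proof (rule integral_mono_AE)
      show "integrable M (\<lambda>x. indicator (B i) x * real_cond_exp M (F i) (X (Suc i)) x)"
        using real_cond_exp_intg(1)[OF i1 ind Xm] by simp
      show "integrable M (\<lambda>x. indicator (B i) x * X i x)" by (rule i2)
      show "AE x in M. indicator (B i) x * real_cond_exp M (F i) (X (Suc i)) x \<le> indicator (B i) x * X i x"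
        using sm[of i] by eventually_elim (auto intro: mult_left_mono)
    qed
    finally have "(\<integral>x. indicator (B i) x * X (Suc i) x \<partial>M) \<le> (\<integral>x. indicator (B i) x * X i x \<partial>M)" .
    moreover have "(\<integral>\<omega>. f i \<omega> \<partial>M) = (\<integral>x. indicator (B i) x * X (Suc i) x \<partial>M) - (\<integral>x. indicator (B i) x * X i x \<partial>M)"
      unfolding f_def right_diff_distrib using i1 i2 by (rule Bochner_Integration.integral_diff)
    ultimately show ?thesis by simp
  qed
  define K where "K i = b1 * real i powr b2 * exp (c3 * real i)" for i
  have Kpos: "K i \<ge> 0" for i unfolding K_def using assms(5) by simp
  have normle: "(\<integral>\<omega>. norm (f i \<omega>) \<partial>M) \<le> K i * measure M (B i)" if "i \<ge> 1" for i
  proof -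
    have "(\<integral>\<omega>. norm (f i \<omega>) \<partial>M) \<le> (\<integral>\<omega>. indicator (B i) \<omega> * K i \<partial>M)"
    proof (rule integral_mono_AE)
      show "integrable M (\<lambda>\<omega>. norm (f i \<omega>))" using fint by auto
      show "integrable M (\<lambda>\<omega>. indicator (B i) \<omega> * K i)"
        using integrable_mult_indicator[OF BM[of i] integrable_const[of "K i"]] by simp
      show "AE \<omega> in M. norm (f i \<omega>) \<le> indicator (B i) \<omega> * K i"
        using A2 that by (auto simp: f_def K_def abs_mult split: split_indicator elim!: allE[of _ i])
    qed
    also have "\<dots> = K i * measure M (B i)" by simp
    finally show ?thesis .
  qed
  obtain N where N: "\<forall>n\<ge>N. measure M (B n) \<le> c1 * exp (- c2 * real n)"
    using A1 unfolding B_def by blast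
  define h where "h n = b1 * c1 * (real n powr b2 * exp (- (c2 - c3) * real n))" for n
  have hs: "summable h" unfolding h_def using summ_aux[of "c2 - c3" b2] assms(10)
    by (intro summable_mult) simp
  have sumnorm: "summable (\<lambda>i. \<integral>\<omega>. norm (f i \<omega>) \<partial>M)"
  proof (rule summable_comparison_test'[OF hs])
    fix n assume n: "max N 1 \<le> n"
    have "norm (\<integral>\<omega>. norm (f n \<omega>) \<partial>M) = (\<integral>\<omega>. norm (f n \<omega>) \<partial>M)" by simp
    also have "\<dots> \<le> K n * measure M (B n)" using normle n by simp
    also have "\<dots> \<le> K n * (c1 * exp (- c2 * real n))"
      using N n Kpos by (intro mult_left_mono) auto
    also have "\<dots> = h n" unfolding K_def h_def
      by (simp add: algebra_simps exp_add[symmetric] exp_diff)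
    finally show "norm (\<integral>\<omega>. norm (f n \<omega>) \<partial>M) \<le> h n" .
  qed
  define Z where "Z = {\<omega> \<in> space M. \<kappa> \<omega> = \<infinity>}"
  have ZB: "Z = (\<Inter>n. B n)" unfolding Z_def B_def using enat_all_less by auto
  have ZM[measurable]: "Z \<in> sets M" unfolding ZB by auto
  have "measure M Z \<le> 0"
  proof (rule tendsto_le[OF sequentially_bot])
    show "(\<lambda>n::nat. c1 * exp (- c2 * real n)) \<longlonglongrightarrow> 0" using assms(8) by real_asymp
    show "(\<lambda>n. measure M Z) \<longlonglongrightarrow> measure M Z" by simp
    show "\<forall>\<^sub>F n in sequentially. measure M Z \<le> c1 * exp (- c2 * real n)"
      unfolding eventually_sequentially
    proof (intro exI allI impI)
      fix n assume "N \<le> n"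
      have "measure M Z \<le> measure M (B n)" unfolding ZB by (intro finite_measure_mono) auto
      then show "measure M Z \<le> c1 * exp (- c2 * real n)" using N \<open>N \<le> n\<close> by force
    qed
  qed
  then have "emeasure M Z = 0" using emeasure_eq_measure[of Z] measure_nonneg[of M Z] by simp
  then have AEfin: "AE \<omega> in M. \<kappa> \<omega> \<noteq> \<infinity>"
    by (subst AE_iff_measurable[OF ZM]) (auto simp: Z_def)
  define S where "S \<omega> = X 0 \<omega> + (\<Sum>i. f i \<omega>)" for \<omega>
  have fm[measurable]: "f i \<in> borel_measurable M" for i using fint by auto
  have Sint: "integrable M S"
  proof -
    have "AE \<omega> in M. summable (\<lambda>i. norm (f i \<omega>))"
      using AEfin
    proof eventually_elim
      case (elim \<omega>)
      then obtain k where k: "\<kappa> \<omega> = enat k" by auto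
      show ?case
        by (rule summable_finite[of "{..<k}"]) (auto simp: f_def B_def k)
    qed
    then show ?thesis unfolding S_def
      using integrable_suminf[OF fint _ sumnorm] Xint[of 0] by auto
  qed
  have Sint_eq: "(\<integral>\<omega>. S \<omega> \<partial>M) = (\<integral>\<omega>. X 0 \<omega> \<partial>M) + (\<Sum>i. \<integral>\<omega>. f i \<omega> \<partial>M)"
  proof -
    have "AE \<omega> in M. summable (\<lambda>i. norm (f i \<omega>))"
      using AEfin
    proof eventually_elim
      case (elim \<omega>)
      then obtain k where k: "\<kappa> \<omega> = enat k" by auto
      show ?case
        by (rule summable_finite[of "{..<k}"]) (auto simp: f_def B_def k)
    qed
    note s = this
    show ?thesis unfolding S_def
      using Bochner_Integration.integral_add[OF Xint[of 0] integrable_suminf[OF fint s sumnorm]]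
        integral_suminf[OF fint s sumnorm] by simp
  qed
  have AEeq: "AE \<omega> in M. stopped_value X \<kappa> \<omega> = S \<omega>"
    using AEfin AE_space
  proof eventually_elim
    case (elim \<omega>)
    then obtain k where k: "\<kappa> \<omega> = enat k" by auto
    note sp = elim(2)
    have "(\<Sum>i. f i \<omega>) = (\<Sum>i\<in>{..<k}. f i \<omega>)"
      by (rule suminf_finite) (auto simp: f_def B_def k)
    also have "\<dots> = (\<Sum>i<k. X (Suc i) \<omega> - X i \<omega>)"
      by (intro sum.cong) (auto simp: f_def B_def k sp split: split_indicator)
    also have "\<dots> = X k \<omega> - X 0 \<omega>" by (rule sum_lessThan_telescope)
    finally show ?case unfolding S_def stopped_value_def k by simp
  qed
  define E where "E k = {\<omega> \<in> space M. \<kappa> \<omega> = enat k}" for k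
  have EL: "E k = L k - (\<Union>j\<in>{..<k}. L j)" for k
  proof -
    have "\<kappa> \<omega> = enat k \<longleftrightarrow> \<kappa> \<omega> \<le> enat k \<and> \<not> (\<exists>j<k. \<kappa> \<omega> \<le> enat j)" for \<omega>
      by (cases "\<kappa> \<omega>") (auto, meson le_neq_implies_less order_refl)
    then show ?thesis unfolding E_def L_def by auto
  qed
  have EM[measurable]: "E k \<in> sets M" for k unfolding EL by auto
  have SVeq: "stopped_value X \<kappa> \<omega> = (\<Sum>k. indicator (E k) \<omega> * X k \<omega>)" if "\<omega> \<in> space M" for \<omega>
  proof (cases "\<kappa> \<omega>")
    case (enat m)
    have "(\<Sum>k. indicator (E k) \<omega> * X k \<omega>) = (\<Sum>k\<in>{m}. indicator (E k) \<omega> * X k \<omega>)"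
      by (rule suminf_finite) (auto simp: E_def enat that)
    then show ?thesis using that by (simp add: stopped_value_def enat E_def)
  next
    case infinity
    then show ?thesis by (simp add: stopped_value_def E_def)
  qed
  have SVm: "stopped_value X \<kappa> \<in> borel_measurable M"
    by (subst measurable_cong[OF SVeq]) auto
  have Sm: "S \<in> borel_measurable M" using Sint by auto
  have I: "integrable M (stopped_value X \<kappa>)"
    using integrable_cong_AE_imp[OF Sint SVm] AEeq by (simp add: eq_commute)
  have "(\<integral>\<omega>. stopped_value X \<kappa> \<omega> \<partial>M) = (\<integral>\<omega>. S \<omega> \<partial>M)"
    using integral_cong_AE[OF SVm Sm AEeq] .
  also have "\<dots> \<le> (\<integral>\<omega>. X 0 \<omega> \<partial>M)"
  proof -
    have "summable (\<lambda>i. \<integral>\<omega>. f i \<omega> \<partial>M)"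
      by (rule summable_comparison_test'[OF sumnorm, of 0]) auto
    then have "(\<Sum>i. \<integral>\<omega>. f i \<omega> \<partial>M) \<le> 0"
      by (rule suminf_le_const) (intro sum_nonpos fle)
    then show ?thesis unfolding Sint_eq by simp
  qed
  finally show ?thesis using I by simp
qed

end
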